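(* Let $X$ be a Baire space and let $Y$ be a first countable topological space such that the strong Choquet game $Ch(Y)$ is $\beta$-unfavorable. Then $X\times Y$ is a Baire space.
   Context: A topological space is a Baire space if every countable intersection of dense open subsets is dense. The strong Choquet game $Ch(Y)$: two players $\beta$ and $\alpha$ alternate, $\beta$ moving first; at round $n$, $\beta$ chooses a point $x_n$ and an open set $V_n$ with $x_n\in V_n$ (and $V_n\subseteq U_{n-1}$ for $n\ge1$), then $\alpha$ chooses an open set $U_n$ with $x_n\in U_n\subseteq V_n$. Player $\alpha$ wins the play if $\bigcap_n U_n\neq\emptyset$; otherwise $\beta$ wins. A strategy for a player is a function assigning a legal move to each finite sequence of the opponent's previous moves; it is winning if the player wins every play compatible with it. $Ch(Y)$ is $\beta$-unfavorable if $\beta$ has no winning strategy. *)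

theory Defs
  imports "HOL-Analysis.Analysis"
begin

text \<open>Baire space: every countable intersection of dense open subsets is dense.
  (Intersection taken inside the topspace, so the empty family gives the whole space.)\<close>
definition baire_space :: "'a topology \<Rightarrow> bool" where
  "baire_space X \<longleftrightarrow>
     (\<forall>\<U>. countable \<U> \<and> (\<forall>U\<in>\<U>. openin X U \<and> X closure_of U = topspace X)
        \<longrightarrow> X closure_of (topspace X \<inter> \<Inter>\<U>) = topspace X)"

text \<open>A strategy for beta maps the finite list [U_0,...,U_(n-1)]
  of alpha's previous moves to beta's move (x_n, V_n).\<close>
definition choquet_compatible ::
  "'a topology \<Rightarrow> ('a set list \<Rightarrow> 'a \<times> 'a set) \<Rightarrow> (nat \<Rightarrow> 'a set) \<Rightarrow> nat \<Rightarrow> bool" where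
  "choquet_compatible Y \<sigma> U n \<longleftrightarrow>
     (\<forall>k<n. openin Y (U k) \<and> fst (\<sigma> (map U [0..<k])) \<in> U k
            \<and> U k \<subseteq> snd (\<sigma> (map U [0..<k])))"

definition beta_winning_strategy ::
  "'a topology \<Rightarrow> ('a set list \<Rightarrow> 'a \<times> 'a set) \<Rightarrow> bool" where
  "beta_winning_strategy Y \<sigma> \<longleftrightarrow>
     (\<forall>U n. choquet_compatible Y \<sigma> U n \<longrightarrow>
        openin Y (snd (\<sigma> (map U [0..<n])))
        \<and> fst (\<sigma> (map U [0..<n])) \<in> snd (\<sigma> (map U [0..<n]))
        \<and> (\<forall>m. n = Suc m \<longrightarrow> snd (\<sigma> (map U [0..<n])) \<subseteq> U m))
   \<and> (\<forall>U. (\<forall>n. choquet_compatible Y \<sigma> U n) \<longrightarrow> (\<Inter>n. U n) = {})"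

definition strong_choquet_beta_unfavorable :: "'a topology \<Rightarrow> bool" where
  "strong_choquet_beta_unfavorable Y \<longleftrightarrow> \<not> (\<exists>\<sigma>. beta_winning_strategy Y \<sigma>)"

end

theory Submission imports Defs begin
lemma maxfam:
  fixes good :: "('a set \<times> 'c) set"
  assumes gd: "\<And>P. openin X P \<Longrightarrow> P \<noteq> {} \<Longrightarrow> P \<subseteq> Q \<Longrightarrow> \<exists>c\<in>good. fst c \<subseteq> P"
  and go: "\<And>c. c\<in>good \<Longrightarrow> fst c \<noteq> {}"
  shows "\<exists>F\<subseteq>good. (\<forall>c1\<in>F. \<forall>c2\<in>F. c1 \<noteq> c2 \<longrightarrow> fst c1 \<inter> fst c2 = {})
     \<and> (\<forall>P. openin X P \<and> P \<noteq> {} \<and> P \<subseteq> Q \<longrightarrow> (\<Union>c\<in>F. fst c) \<inter> P \<noteq> {})"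
proof -
  define \<A> where "\<A> = {F. F \<subseteq> good \<and> (\<forall>c1\<in>F. \<forall>c2\<in>F. c1 \<noteq> c2 \<longrightarrow> fst c1 \<inter> fst c2 = {})}"
  have "\<forall>C\<in>chains \<A>. \<Union>C \<in> \<A>"
  proof
    fix C assume C: "C \<in> chains \<A>"
    then have sub: "C \<subseteq> \<A>" and ch: "\<forall>F1\<in>C. \<forall>F2\<in>C. F1 \<subseteq> F2 \<or> F2 \<subseteq> F1"
      by (auto simp: chains_def chain_subset_def)
    show "\<Union>C \<in> \<A>"
      unfolding \<A>_def
    proof (intro CollectI conjI ballI impI)
      show "\<Union>C \<subseteq> good" using sub by (auto simp: \<A>_def)
      fix c1 c2 assume c1: "c1 \<in> \<Union>C" and c2: "c2 \<in> \<Union>C" and ne: "c1 \<noteq> c2"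
      then obtain F1 F2 where "F1 \<in> C" "F2 \<in> C" "c1 \<in> F1" "c2 \<in> F2" by auto
      with ch have "\<exists>F\<in>C. c1 \<in> F \<and> c2 \<in> F" by blast
      then obtain F where "F \<in> C" "c1 \<in> F" "c2 \<in> F" by blast
      then have "F \<in> \<A>" using sub by blast
      then have "\<forall>c1\<in>F. \<forall>c2\<in>F. c1 \<noteq> c2 \<longrightarrow> fst c1 \<inter> fst c2 = {}" by (simp add: \<A>_def)
      then show "fst c1 \<inter> fst c2 = {}" using \<open>c1 \<in> F\<close> \<open>c2 \<in> F\<close> ne by blast
    qed
  qed
  from Zorn_Lemma[OF this] obtain M where M: "M \<in> \<A>" and mx: "\<And>F. F \<in> \<A> \<Longrightarrow> M \<subseteq> F \<Longrightarrow> F = M"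
    by blast
  have "(\<Union>c\<in>M. fst c) \<inter> P \<noteq> {}" if P: "openin X P" "P \<noteq> {}" "P \<subseteq> Q" for P
  proof
    assume e: "(\<Union>c\<in>M. fst c) \<inter> P = {}"
    obtain c where c: "c \<in> good" "fst c \<subseteq> P" using gd P by blast
    have cn: "c \<notin> M" using e c go[of c] by blast
    have Md: "M \<subseteq> good" "\<forall>c1\<in>M. \<forall>c2\<in>M. c1 \<noteq> c2 \<longrightarrow> fst c1 \<inter> fst c2 = {}"
      using M by (simp_all add: \<A>_def)
    have dj: "\<And>d. d \<in> M \<Longrightarrow> fst c \<inter> fst d = {}" using e c(2) by blast
    have "insert c M \<in> \<A>" unfolding \<A>_def
    proof (intro CollectI conjI ballI impI)
      show "insert c M \<subseteq> good" using Md c by blast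
      fix c1 c2 assume "c1 \<in> insert c M" "c2 \<in> insert c M" "c1 \<noteq> c2"
      then show "fst c1 \<inter> fst c2 = {}" using Md(2) dj by (metis Int_commute insertE)
    qed
    then have "insert c M = M" using mx by blast
    with cn show False by blast
  qed
  then have dn: "\<forall>P. openin X P \<and> P \<noteq> {} \<and> P \<subseteq> Q \<longrightarrow> (\<Union>c\<in>M. fst c) \<inter> P \<noteq> {}" by blast
  have Md: "M \<subseteq> good" "\<forall>c1\<in>M. \<forall>c2\<in>M. c1 \<noteq> c2 \<longrightarrow> fst c1 \<inter> fst c2 = {}"
    using M by (simp_all add: \<A>_def)
  show ?thesis by (rule exI[of _ M]) (use Md dn in simp)
qed
lemma allimp3: "\<forall>P. a P \<and> b P \<and> c P \<longrightarrow> d P \<Longrightarrow> a P \<Longrightarrow> b P \<Longrightarrow> c P \<Longrightarrow> d P"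
  by blast

lemma boxlem:
  assumes Wo: "openin (prod_topology X Y) W"
    and Wd: "(prod_topology X Y) closure_of W = topspace (prod_topology X Y)"
    and P: "openin X P" "P \<noteq> {}" and T: "openin Y T" "T \<noteq> {}"
  shows "\<exists>G v V. openin X G \<and> G \<noteq> {} \<and> G \<subseteq> P \<and> openin Y V \<and> v \<in> V \<and> V \<subseteq> T \<and> G \<times> V \<subseteq> W"
proof -
  have "openin (prod_topology X Y) (P \<times> T)" using P T by (simp add: openin_prod_Times_iff)
  moreover have "P \<times> T \<noteq> {}" using P T by simp
  ultimately have "W \<inter> (P \<times> T) \<noteq> {}" using Wd dense_intersects_open by blast
  then obtain a b where ab: "(a,b) \<in> W \<inter> (P \<times> T)" by auto
  have "openin (prod_topology X Y) (W \<inter> (P \<times> T))"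
    using Wo \<open>openin (prod_topology X Y) (P \<times> T)\<close> by blast
  then obtain U V where "openin X U" "openin Y V" "a \<in> U" "b \<in> V" "U \<times> V \<subseteq> W \<inter> (P \<times> T)"
    using ab openin_prod_topology_alt by metis
  then show ?thesis
    by (intro exI[of _ U] exI[of _ b] exI[of _ V]) auto
qed

lemma nblem:
  fixes Y :: "'a topology"
  assumes "first_countable Y"
  obtains nb :: "'a \<Rightarrow> nat \<Rightarrow> 'a set" where "\<And>y k. y \<in> topspace Y \<Longrightarrow> openin Y (nb y k)"
    "\<And>y U. y \<in> topspace Y \<Longrightarrow> openin Y U \<Longrightarrow> y \<in> U \<Longrightarrow> \<exists>k. y \<in> nb y k \<and> nb y k \<subseteq> U"
proof -
  have "\<forall>y\<in>topspace Y. \<exists>\<B>. countable \<B> \<and> (\<forall>V \<in> \<B>. openin Y V) \<and>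
             (\<forall>U. openin Y U \<and> y \<in> U \<longrightarrow> (\<exists>V \<in> \<B>. y \<in> V \<and> V \<subseteq> U))"
    using assms by (simp add: first_countable_def)
  then obtain lb where lb: "\<And>y. y\<in>topspace Y \<Longrightarrow> countable (lb y) \<and> (\<forall>V \<in> lb y. openin Y V) \<and>
             (\<forall>U. openin Y U \<and> y \<in> U \<longrightarrow> (\<exists>V \<in> lb y. y \<in> V \<and> V \<subseteq> U))"
    by metis
  have ne: "lb y \<noteq> {}" if "y \<in> topspace Y" for y
    using lb[OF that] that by (metis empty_iff openin_topspace)
  show ?thesis
  proof (rule that[of "\<lambda>y k. from_nat_into (lb y) k"])
    fix y k assume y: "y \<in> topspace Y"
    show "openin Y (from_nat_into (lb y) k)" using lb[OF y] from_nat_into[OF ne[OF y]] by blast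
  next
    fix y U assume y: "y \<in> topspace Y" and U: "openin Y U" "y \<in> U"
    then obtain V where V: "V \<in> lb y" "y \<in> V" "V \<subseteq> U" using lb[OF y] by blast
    then obtain k where "from_nat_into (lb y) k = V" using from_nat_into_surj lb[OF y] by metis
    then show "\<exists>k. y \<in> from_nat_into (lb y) k \<and> from_nat_into (lb y) k \<subseteq> U" using V by blast
  qed
qed
lemma key:
  fixes X :: "'a topology" and Y :: "'b topology" and W :: "nat \<Rightarrow> ('a \<times> 'b) set"
  assumes bX: "baire_space X" and fc: "first_countable Y" and unf: "strong_choquet_beta_unfavorable Y"
    and Wo: "\<And>n. openin (prod_topology X Y) (W n)"
    and Wd: "\<And>n. (prod_topology X Y) closure_of (W n) = topspace (prod_topology X Y)"
    and A: "openin X A" "A \<noteq> {}" and B: "openin Y B" "B \<noteq> {}"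
  shows "\<exists>x y. (x,y) \<in> A \<times> B \<and> (\<forall>n. (x,y) \<in> W n)"
proof (rule ccontr)
  assume nope: "\<not> ?thesis"
  obtain nb :: "'b \<Rightarrow> nat \<Rightarrow> 'b set" where nbo: "\<And>y k. y \<in> topspace Y \<Longrightarrow> openin Y (nb y k)"
    and nbs: "\<And>y U. y \<in> topspace Y \<Longrightarrow> openin Y U \<Longrightarrow> y \<in> U \<Longrightarrow> \<exists>k. y \<in> nb y k \<and> nb y k \<subseteq> U"
    using nblem[OF fc] by metis
  define valid :: "'a set \<times> 'b \<times> 'b set \<Rightarrow> bool" where
    "valid c \<longleftrightarrow> openin X (fst c) \<and> fst c \<noteq> {} \<and> openin Y (snd (snd c)) \<and> fst (snd c) \<in> snd (snd c)" for c
  define goodroot where "goodroot = {c. valid c \<and> fst c \<subseteq> A \<and> snd (snd c) \<subseteq> B \<and> fst c \<times> snd (snd c) \<subseteq> W 0}"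
  define goodch where "goodch n C k = {c. valid c \<and> fst c \<subseteq> fst C \<and> snd (snd c) \<subseteq> snd (snd C)
      \<and> (fst (snd C) \<in> nb (fst (snd C)) k \<longrightarrow> snd (snd c) \<subseteq> nb (fst (snd C)) k)
      \<and> fst c \<times> snd (snd c) \<subseteq> W (Suc n)}" for n C k
  have r1: "\<exists>c\<in>goodroot. fst c \<subseteq> P" if P: "openin X P" "P \<noteq> {}" "P \<subseteq> A" for P
  proof -
    obtain G v V where GV: "openin X G" "G \<noteq> {}" "G \<subseteq> P" "openin Y V" "v \<in> V" "V \<subseteq> B" "G \<times> V \<subseteq> W 0"
      using boxlem[OF Wo[of 0] Wd[of 0] P(1,2) B] by blast
    have "(G, v, V) \<in> goodroot" unfolding goodroot_def valid_def using GV P(3) by simp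
    then show "\<exists>c\<in>goodroot. fst c \<subseteq> P" using GV(3) by force
  qed
  have r2: "fst c \<noteq> {}" if "c \<in> goodroot" for c using that by (simp add: goodroot_def valid_def)
  have "\<exists>F\<subseteq>goodroot. (\<forall>c1\<in>F. \<forall>c2\<in>F. c1 \<noteq> c2 \<longrightarrow> fst c1 \<inter> fst c2 = {})
     \<and> (\<forall>P. openin X P \<and> P \<noteq> {} \<and> P \<subseteq> A \<longrightarrow> (\<Union>c\<in>F. fst c) \<inter> P \<noteq> {})"
    by (rule maxfam[where X=X and Q=A and good=goodroot, OF r1 r2])
  then obtain F0 where F0all: "F0 \<subseteq> goodroot \<and> (\<forall>c1\<in>F0. \<forall>c2\<in>F0. c1 \<noteq> c2 \<longrightarrow> fst c1 \<inter> fst c2 = {})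
     \<and> (\<forall>P. openin X P \<and> P \<noteq> {} \<and> P \<subseteq> A \<longrightarrow> (\<Union>c\<in>F0. fst c) \<inter> P \<noteq> {})" ..
  have F0: "F0 \<subseteq> goodroot" "\<forall>c1\<in>F0. \<forall>c2\<in>F0. c1 \<noteq> c2 \<longrightarrow> fst c1 \<inter> fst c2 = {}"
     "\<And>P. openin X P \<Longrightarrow> P \<noteq> {} \<Longrightarrow> P \<subseteq> A \<Longrightarrow> (\<Union>c\<in>F0. fst c) \<inter> P \<noteq> {}"
    using F0all[THEN conjunct1] F0all[THEN conjunct2, THEN conjunct1]
      allimp3[OF F0all[THEN conjunct2, THEN conjunct2]] by auto
  have c1: "\<exists>c\<in>goodch n C k. fst c \<subseteq> P"
    if C: "valid C" and P: "openin X P" "P \<noteq> {}" "P \<subseteq> fst C" for n C k P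
  proof -
    define y where "y = fst (snd C)"
    have yt: "y \<in> topspace Y" using C unfolding valid_def y_def by (meson openin_subset subsetD)
    define T where "T = snd (snd C) \<inter> (if y \<in> nb y k then nb y k else topspace Y)"
    have T: "openin Y T" "T \<noteq> {}" using C nbo[OF yt] yt unfolding T_def valid_def y_def by auto
    obtain G v V where GV: "openin X G" "G \<noteq> {}" "G \<subseteq> P" "openin Y V" "v \<in> V" "V \<subseteq> T" "G \<times> V \<subseteq> W (Suc n)"
      using boxlem[OF Wo[of "Suc n"] Wd[of "Suc n"] P(1,2) T] by blast
    have "(G, v, V) \<in> goodch n C k" unfolding goodch_def valid_def using GV P(3)
      by (auto simp: T_def y_def split: if_splits)
    then show ?thesis using GV(3) by force
  qed
  have c2: "fst c \<noteq> {}" if "c \<in> goodch n C k" for n C k c using that by (simp add: goodch_def valid_def)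
  have exR: "\<exists>F\<subseteq>goodch n C k. (\<forall>c1\<in>F. \<forall>c2\<in>F. c1 \<noteq> c2 \<longrightarrow> fst c1 \<inter> fst c2 = {})
     \<and> (\<forall>P. openin X P \<and> P \<noteq> {} \<and> P \<subseteq> fst C \<longrightarrow> (\<Union>c\<in>F. fst c) \<inter> P \<noteq> {})"
    if C: "valid C" for n C k
    by (rule maxfam[where X=X and Q="fst C" and good="goodch n C k", OF c1[OF C] c2])
  define Rf where "Rf n C k = (SOME F. F \<subseteq> goodch n C k \<and> (\<forall>c1\<in>F. \<forall>c2\<in>F. c1 \<noteq> c2 \<longrightarrow> fst c1 \<inter> fst c2 = {})
     \<and> (\<forall>P. openin X P \<and> P \<noteq> {} \<and> P \<subseteq> fst C \<longrightarrow> (\<Union>c\<in>F. fst c) \<inter> P \<noteq> {}))" for n C k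
  have Rf_all: "Rf n C k \<subseteq> goodch n C k \<and> (\<forall>c1\<in>Rf n C k. \<forall>c2\<in>Rf n C k. c1 \<noteq> c2 \<longrightarrow> fst c1 \<inter> fst c2 = {})
     \<and> (\<forall>P. openin X P \<and> P \<noteq> {} \<and> P \<subseteq> fst C \<longrightarrow> (\<Union>c\<in>Rf n C k. fst c) \<inter> P \<noteq> {})"
    if "valid C" for n C k
    unfolding Rf_def by (rule someI_ex[OF exR[OF that]])
  have Rf: "\<And>n C k. valid C \<Longrightarrow> Rf n C k \<subseteq> goodch n C k"
     "\<And>n C k. valid C \<Longrightarrow> \<forall>c1\<in>Rf n C k. \<forall>c2\<in>Rf n C k. c1 \<noteq> c2 \<longrightarrow> fst c1 \<inter> fst c2 = {}"
     "\<And>n C k P. valid C \<Longrightarrow> openin X P \<Longrightarrow> P \<noteq> {} \<Longrightarrow> P \<subseteq> fst C \<Longrightarrow> (\<Union>c\<in>Rf n C k. fst c) \<inter> P \<noteq> {}"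
    using Rf_all[THEN conjunct1] Rf_all[THEN conjunct2, THEN conjunct1]
      allimp3[OF Rf_all[THEN conjunct2, THEN conjunct2]] by auto
  define F where "F = rec_list F0 (\<lambda>k s Fs. \<Union>C\<in>Fs. Rf (length s) C k)"
  have F_Nil: "F [] = F0" and F_Cons: "\<And>k s. F (k#s) = (\<Union>C\<in>F s. Rf (length s) C k)"
    by (simp_all add: F_def)
  have inv: "\<forall>c\<in>F s. valid c \<and> fst c \<subseteq> A \<and> snd (snd c) \<subseteq> B \<and> fst c \<times> snd (snd c) \<subseteq> W (length s)" for s
  proof (induction s)
    case Nil
    then show ?case using F0(1) by (auto simp: F_Nil goodroot_def)
  next
    case (Cons k s)
    show ?case
    proof
      fix c assume "c \<in> F (k#s)"
      then obtain C where C: "C \<in> F s" "c \<in> Rf (length s) C k" by (auto simp: F_Cons)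
      have IC: "valid C" "fst C \<subseteq> A" "snd (snd C) \<subseteq> B" using Cons C(1) by auto
      have "c \<in> goodch (length s) C k" using Rf(1)[OF IC(1), of "length s" k] C(2) by blast
      then show "valid c \<and> fst c \<subseteq> A \<and> snd (snd c) \<subseteq> B \<and> fst c \<times> snd (snd c) \<subseteq> W (length (k#s))"
        using IC unfolding goodch_def by auto
    qed
  qed
  have disj: "\<forall>c1\<in>F s. \<forall>c2\<in>F s. c1 \<noteq> c2 \<longrightarrow> fst c1 \<inter> fst c2 = {}" for s
  proof (induction s)
    case Nil
    then show ?case using F0(2) by (simp add: F_Nil)
  next
    case (Cons k s)
    show ?case
    proof (intro ballI impI)
      fix c1 c2 assume c1: "c1 \<in> F (k#s)" and c2: "c2 \<in> F (k#s)" and ne: "c1 \<noteq> c2"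
      from c1 obtain C1 where C1: "C1 \<in> F s" "c1 \<in> Rf (length s) C1 k" by (auto simp: F_Cons)
      from c2 obtain C2 where C2: "C2 \<in> F s" "c2 \<in> Rf (length s) C2 k" by (auto simp: F_Cons)
      have v1: "valid C1" and v2: "valid C2" using inv C1 C2 by blast+
      have s1: "fst c1 \<subseteq> fst C1" using Rf(1)[OF v1, of "length s" k] C1(2) unfolding goodch_def by blast
      have s2: "fst c2 \<subseteq> fst C2" using Rf(1)[OF v2, of "length s" k] C2(2) unfolding goodch_def by blast
      show "fst c1 \<inter> fst c2 = {}"
      proof (cases "C1 = C2")
        case True
        then show ?thesis using Rf(2)[OF v1] C1 C2 ne by blast
      next
        case False
        then have "fst C1 \<inter> fst C2 = {}" using Cons C1 C2 by blast
        then show ?thesis using s1 s2 by blast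
      qed
    qed
  qed
  have dens: "(\<Union>c\<in>F s. fst c) \<inter> P \<noteq> {}" if "openin X P" "P \<noteq> {}" "P \<subseteq> A" for s P
    using that
  proof (induction s arbitrary: P)
    case Nil
    then show ?case using F0(3) by (simp add: F_Nil)
  next
    case (Cons k s)
    then obtain C where C: "C \<in> F s" "fst C \<inter> P \<noteq> {}" by blast
    have vC: "valid C" using inv C(1) by blast
    have "openin X (fst C \<inter> P)" using vC Cons.prems(1) unfolding valid_def by blast
    then have "(\<Union>c\<in>Rf (length s) C k. fst c) \<inter> (fst C \<inter> P) \<noteq> {}"
      using Rf(3)[OF vC] C(2) by blast
    then show ?case using C(1) by (auto simp: F_Cons)
  qed
  define E where "E s = (\<Union>c\<in>F s. fst c) \<union> (topspace X - X closure_of A)" for s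
  have Eo: "openin X (E s)" for s
  proof -
    have "openin X (fst c)" if "c \<in> F s" for c using inv[of s] that unfolding valid_def by blast
    then have "openin X (\<Union>c\<in>F s. fst c)" by blast
    moreover have "openin X (topspace X - X closure_of A)"
      by (rule openin_diff[OF openin_topspace closedin_closure_of])
    ultimately show ?thesis unfolding E_def by blast
  qed
  have Ed: "X closure_of (E s) = topspace X" for s
    unfolding dense_intersects_open
  proof (intro allI impI)
    fix T assume T: "openin X T \<and> T \<noteq> {}"
    show "E s \<inter> T \<noteq> {}"
    proof (cases "T \<inter> A = {}")
      case True
      then have "T \<inter> X closure_of A = {}" using openin_Int_closure_of_eq_empty T by blast
      moreover have "T \<subseteq> topspace X" using T openin_subset by blast
      ultimately show ?thesis using T unfolding E_def by blast
    next
      case False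
      have "openin X (T \<inter> A)" using T A by blast
      then have "(\<Union>c\<in>F s. fst c) \<inter> (T \<inter> A) \<noteq> {}" using dens False by blast
      then show ?thesis unfolding E_def by blast
    qed
  qed
  have "countable (range E)" by (rule countable_image[OF countableI_type])
  moreover have "\<forall>U\<in>range E. openin X U \<and> X closure_of U = topspace X" using Eo Ed by simp
  ultimately have dE: "X closure_of (topspace X \<inter> \<Inter>(range E)) = topspace X"
    using bX[unfolded baire_space_def, rule_format, of "range E"] by simp
  have "(topspace X \<inter> \<Inter>(range E)) \<inter> A \<noteq> {}"
    using dE[unfolded dense_intersects_open, rule_format, OF conjI[OF A(1) A(2)]] .
  then obtain x where "x \<in> (topspace X \<inter> \<Inter>(range E)) \<inter> A" by blast
  then have x: "x \<in> A" "\<And>s. x \<in> E s" by auto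
  have xcl: "x \<in> X closure_of A" using closure_of_subset[OF openin_subset[OF A(1)]] x(1) by blast
  have xD: "\<exists>c\<in>F s. x \<in> fst c" for s
  proof -
    have "x \<in> (\<Union>c\<in>F s. fst c)" using x(2)[of s] xcl unfolding E_def by blast
    then show ?thesis by blast
  qed
  define Pc where "Pc s = (THE c. c \<in> F s \<and> x \<in> fst c)" for s
  have uq: "\<exists>!c. c \<in> F s \<and> x \<in> fst c" for s
  proof -
    obtain c where c: "c \<in> F s" "x \<in> fst c" using xD[of s] by blast
    show ?thesis
    proof (rule ex1I[of _ c])
      show "c \<in> F s \<and> x \<in> fst c" using c by simp
      fix d assume d: "d \<in> F s \<and> x \<in> fst d"
      show "d = c"
      proof (rule ccontr)
        assume "d \<noteq> c"
        then have "fst d \<inter> fst c = {}" using disj[of s] d c(1) by blast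
        then show False using d c(2) by blast
      qed
    qed
  qed
  have Pc: "Pc s \<in> F s" "x \<in> fst (Pc s)" for s
    using theI'[OF uq[of s]] unfolding Pc_def by simp_all
  have Pc_child: "Pc (k#s) \<in> Rf (length s) (Pc s) k" for k s
  proof -
    obtain C where C: "C \<in> F s" "Pc (k#s) \<in> Rf (length s) C k" using Pc(1)[of "k#s"] by (auto simp: F_Cons)
    have vC: "valid C" using inv C(1) by blast
    have "fst (Pc (k#s)) \<subseteq> fst C" using Rf(1)[OF vC, of "length s" k] C(2) unfolding goodch_def by blast
    then have "x \<in> fst C" using Pc(2) by blast
    then have "C = Pc s" using uq[of s] Pc[of s] C(1) by (metis)
    then show ?thesis using C(2) by simp
  qed
  define yc where "yc s = fst (snd (Pc s))" for s
  define Vc where "Vc s = snd (snd (Pc s))" for s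
  have cell: "openin Y (Vc s)" "yc s \<in> Vc s" "Vc s \<subseteq> B" "fst (Pc s) \<times> Vc s \<subseteq> W (length s)" for s
    using inv[of s] Pc(1)[of s] unfolding yc_def Vc_def valid_def by auto
  define step where "step s u = (SOME k. yc s \<in> nb (yc s) k \<and> nb (yc s) k \<subseteq> u) # s" for s u
  define node where "node us = foldl step [] us" for us
  define \<sigma> where "\<sigma> us = (yc (node us), Vc (node us))" for us
  have flen: "length (foldl step a us) = length a + length us" for a us
    by (induction us arbitrary: a) (simp_all add: step_def)
  have node_len: "length (node us) = length us" for us using flen[of "[]" us] by (simp add: node_def)
  have node_snoc: "node (us @ [u]) = step (node us) u" for us u by (simp add: node_def)
  have cpm: "openin Y (U m) \<and> yc (node (map U [0..<m])) \<in> U m \<and> U m \<subseteq> Vc (node (map U [0..<m]))"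
    if "choquet_compatible Y \<sigma> U n" "m < n" for U n m
    using that by (simp add: choquet_compatible_def \<sigma>_def)
  have win: "beta_winning_strategy Y \<sigma>"
    unfolding beta_winning_strategy_def
  proof (intro conjI allI impI)
    fix U n assume cp: "choquet_compatible Y \<sigma> U n"
    show "openin Y (snd (\<sigma> (map U [0..<n])))" using cell by (simp add: \<sigma>_def)
    show "fst (\<sigma> (map U [0..<n])) \<in> snd (\<sigma> (map U [0..<n]))" using cell by (simp add: \<sigma>_def)
    fix m assume nm: "n = Suc m"
    define s where "s = node (map U [0..<m])"
    have c: "openin Y (U m)" "yc s \<in> U m" using cpm[OF cp, of m] nm by (auto simp: s_def)
    have yt: "yc s \<in> topspace Y" using c openin_subset by blast
    define k0 where "k0 = (SOME k. yc s \<in> nb (yc s) k \<and> nb (yc s) k \<subseteq> U m)"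
    have k0: "yc s \<in> nb (yc s) k0 \<and> nb (yc s) k0 \<subseteq> U m"
      unfolding k0_def using nbs[OF yt c] by (rule someI_ex)
    have nd: "node (map U [0..<n]) = k0 # s" using nm node_snoc
      by (simp add: s_def step_def k0_def)
    have vP: "valid (Pc s)" using inv Pc(1) by blast
    have "Pc (k0 # s) \<in> goodch (length s) (Pc s) k0" using Pc_child[of k0 s] Rf(1)[OF vP, of "length s" k0] by blast
    then have "Vc (k0 # s) \<subseteq> nb (yc s) k0" using k0 unfolding goodch_def Vc_def yc_def by auto
    then have "Vc (k0 # s) \<subseteq> U m" using k0 by blast
    then show "snd (\<sigma> (map U [0..<n])) \<subseteq> U m" using nd by (simp add: \<sigma>_def)
  next
    fix U :: "nat \<Rightarrow> 'b set" assume cp: "\<forall>n. choquet_compatible Y \<sigma> U n"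
    show "(\<Inter>n. U n) = {}"
    proof (rule ccontr)
      assume "(\<Inter>n. U n) \<noteq> {}"
      then obtain y where y: "\<And>n. y \<in> U n" by blast
      have "(x, y) \<in> W n" for n
      proof -
        have "U n \<subseteq> Vc (node (map U [0..<n]))" using cpm[OF cp[rule_format, of "Suc n"], of n] by simp
        then have "(x,y) \<in> fst (Pc (node (map U [0..<n]))) \<times> Vc (node (map U [0..<n]))"
          using y Pc(2) by blast
        then show ?thesis using cell(4) node_len by force
      qed
      moreover have "y \<in> B"
        using cpm[OF cp[rule_format, of "Suc 0"], of 0] y[of 0] cell(3) by auto
      ultimately show False using nope x(1) by blast
    qed
  qed
  then show False using unf unfolding strong_choquet_beta_unfavorable_def by blast
qed

theorem theorem1p1:
  fixes X :: "'a topology" and Y :: "'b topology"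
  assumes "baire_space X"
    and "first_countable Y"
    and "strong_choquet_beta_unfavorable Y"
  shows "baire_space (prod_topology X Y)"
  unfolding baire_space_def
proof (intro allI impI)
  fix \<U> assume U: "countable \<U> \<and> (\<forall>U\<in>\<U>. openin (prod_topology X Y) U \<and> prod_topology X Y closure_of U = topspace (prod_topology X Y))"
  show "prod_topology X Y closure_of (topspace (prod_topology X Y) \<inter> \<Inter> \<U>) = topspace (prod_topology X Y)"
  proof (cases "\<U> = {}")
    case True
    then show ?thesis using closure_of_topspace[of "prod_topology X Y"] by simp
  next
    case False
    define W where "W = from_nat_into \<U>"
    have rW: "range W = \<U>" using False U by (simp add: W_def)
    have Wi: "W n \<in> \<U>" for n using rW by blast
    have Wod: "openin (prod_topology X Y) (W n) \<and> prod_topology X Y closure_of (W n) = topspace (prod_topology X Y)" for n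
      using U[THEN conjunct2] Wi[of n] by (rule bspec)
    have Wo: "\<And>n. openin (prod_topology X Y) (W n)" using Wod by simp
    have Wd: "\<And>n. prod_topology X Y closure_of (W n) = topspace (prod_topology X Y)" using Wod by simp
    show ?thesis unfolding dense_intersects_open
    proof (intro allI impI)
      fix T assume T: "openin (prod_topology X Y) T \<and> T \<noteq> {}"
      then obtain a b where ab: "(a,b) \<in> T" by auto
      have "\<exists>U V. openin X U \<and> openin Y V \<and> a \<in> U \<and> b \<in> V \<and> U \<times> V \<subseteq> T"
        using T[THEN conjunct1, unfolded openin_prod_topology_alt, rule_format, OF ab] .
      then obtain A B where AB: "openin X A" "openin Y B" "a \<in> A" "b \<in> B" "A \<times> B \<subseteq> T"
        by blast
      have "A \<noteq> {}" "B \<noteq> {}" using AB(3,4) by auto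
      then obtain x y where xy: "(x,y) \<in> A \<times> B" "\<And>n. (x,y) \<in> W n"
        using key[where W=W, OF assms Wo Wd AB(1) _ AB(2)] by blast
      have "A \<subseteq> topspace X" "B \<subseteq> topspace Y" using AB(1,2) openin_subset by auto
      then have "(x,y) \<in> topspace (prod_topology X Y)" using xy(1) by auto
      moreover have "(x,y) \<in> \<Inter>\<U>" using xy(2) rW by blast
      moreover have "(x,y) \<in> T" using xy(1) AB(5) by blast
      ultimately show "(topspace (prod_topology X Y) \<inter> \<Inter> \<U>) \<inter> T \<noteq> {}" by blast
    qed
  qed
qed

end
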